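(* Let $\mathfrak{g}$ be a non-abelian real Lie algebra of dimension $m=2n$. Then every almost-complex structure on $\mathfrak{g}$ is integrable (i.e. $\mathcal{C}(\mathfrak{g})=\mathcal{C}$) if and only if $\mathfrak{g}$ has a basis $\{e_0,e_1,\dots,e_{m-1}\}$ such that $[e_0,e_i]=e_i=-[e_i,e_0]$ for all $i\ge1$, with all other brackets of basis elements zero.
   Context: $\mathcal{C}$ is the set of linear maps $J\colon\mathfrak{g}\to\mathfrak{g}$ with $J^2=-1$ (almost-complex structures), and $\mathcal{C}(\mathfrak{g})\subseteq\mathcal{C}$ is the subset of those satisfying $[JX,JY]=[X,Y]+J[JX,Y]+J[X,JY]$ for all $X,Y\in\mathfrak{g}$. *)

theory Defs
  imports "HOL-Analysis.Analysis"
begin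

definition lie_algebra :: "('a::real_vector \<Rightarrow> 'a \<Rightarrow> 'a) \<Rightarrow> bool" where
  "lie_algebra br \<longleftrightarrow> bilinear br \<and> (\<forall>x. br x x = 0) \<and>
     (\<forall>x y z. br x (br y z) + br y (br z x) + br z (br x y) = 0)"

definition abelian :: "('a::real_vector \<Rightarrow> 'a \<Rightarrow> 'a) \<Rightarrow> bool" where
  "abelian br \<longleftrightarrow> (\<forall>x y. br x y = 0)"

definition almost_complex_structures :: "('a::real_vector \<Rightarrow> 'a) set" where
  "almost_complex_structures = {J. linear J \<and> (\<forall>x. J (J x) = - x)}"

definition integrable_acs :: "('a::real_vector \<Rightarrow> 'a \<Rightarrow> 'a) \<Rightarrow> ('a \<Rightarrow> 'a) set" where
  "integrable_acs br = {J \<in> almost_complex_structures.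
     \<forall>X Y. br (J X) (J Y) = br X Y + J (br (J X) Y) + J (br X (J Y))}"

end

theory Submission imports Defs begin

lemma br_antisym:
  assumes "lie_algebra br" shows "br x y = - br y x"
proof -
  have b: "bilinear br" and a: "\<And>x. br x x = 0" using assms unfolding lie_algebra_def by auto
  have "0 = br (x+y) (x+y)" using a by simp
  also have "\<dots> = br x x + br x y + br y x + br y y"
    using bilinear_ladd[OF b] bilinear_radd[OF b] by simp
  finally show ?thesis using a by (simp add: eq_neg_iff_add_eq_0)
qed

lemma easy_dir:
  assumes b: "bilinear br" and lp: "linear \<phi>"
    and eq: "\<And>x y. br x y = \<phi> x *\<^sub>R y - \<phi> y *\<^sub>R x"
    and J: "J \<in> almost_complex_structures"
  shows "J \<in> integrable_acs br"
proof -
  have lJ: "linear J" and JJ: "\<And>x. J (J x) = - x" using J unfolding almost_complex_structures_def by auto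
  show ?thesis unfolding integrable_acs_def
    using J by (auto simp: eq linear_diff[OF lJ] linear_cmul[OF lJ] JJ algebra_simps)
qed


lemma from_basis:
  fixes br :: "'a::euclidean_space \<Rightarrow> 'a \<Rightarrow> 'a"
  assumes L: "lie_algebra br"
    and inj: "inj_on e {..<DIM('a)}"
    and ind: "independent (e ` {..<DIM('a)})" and sp: "span (e ` {..<DIM('a)}) = UNIV"
    and b1: "\<forall>i\<in>{1..<DIM('a)}. br (e 0) (e i) = e i \<and> br (e i) (e 0) = - e i"
    and b2: "\<forall>i<DIM('a). \<forall>j<DIM('a). (i = 0 \<longleftrightarrow> j = 0) \<longrightarrow> br (e i) (e j) = 0"
  shows "integrable_acs br = almost_complex_structures"
proof -
  let ?E = "e ` {..<DIM('a)}"
  have b: "bilinear br" using L unfolding lie_algebra_def by auto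
  obtain \<phi> :: "'a \<Rightarrow> real" where lp: "linear \<phi>" and pv: "\<forall>x\<in>?E. \<phi> x = (if x = e 0 then 1 else 0)"
    using linear_independent_extend[OF ind, of "\<lambda>x. if x = e 0 then (1::real) else 0"] by blast
  have p0: "\<phi> (e 0) = 1" using pv by auto
  have pi: "\<phi> (e i) = 0" if "i < DIM('a)" "i \<noteq> 0" for i
  proof -
    have "0 < DIM('a)" by (rule DIM_positive)
    then have "e i \<noteq> e 0" using inj that unfolding inj_on_def by blast
    thus ?thesis using pv that by auto
  qed
  have bg: "bilinear (\<lambda>x y. \<phi> x *\<^sub>R y - \<phi> y *\<^sub>R x)"
    unfolding bilinear_def
    by (auto intro!: linearI simp: linear_add[OF lp] linear_cmul[OF lp] algebra_simps)
  have eq: "br x y = \<phi> x *\<^sub>R y - \<phi> y *\<^sub>R x" for x y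
  proof (rule bilinear_eq[OF b bg, of UNIV ?E UNIV ?E])
    fix u v assume "u \<in> ?E" "v \<in> ?E"
    then obtain i j where ij: "i < DIM('a)" "j < DIM('a)" "u = e i" "v = e j" by auto
    show "br u v = \<phi> u *\<^sub>R v - \<phi> v *\<^sub>R u"
    proof (cases "i = 0")
      case True
      then show ?thesis
      proof (cases "j = 0")
        case True
        then show ?thesis using ij b2 \<open>i = 0\<close> by (simp add: bilinear_lzero[OF b])
      next
        case False
        have "j \<in> {1..<DIM('a)}" using ij False by auto
        then have "br (e 0) (e j) = e j" using b1 by blast
        then show ?thesis using ij \<open>i = 0\<close> pi[of j] p0 False by simp
      qed
    next
      case False
      then show ?thesis
      proof (cases "j = 0")
        case True
        have "i \<in> {1..<DIM('a)}" using ij \<open>i \<noteq> 0\<close> by auto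
        then have "br (e i) (e 0) = - e i" using b1 by blast
        then show ?thesis using ij True pi[of i] p0 \<open>i \<noteq> 0\<close> by simp
      next
        case False
        have "br (e i) (e j) = 0" using b2 ij False \<open>i \<noteq> 0\<close> by blast
        then show ?thesis using ij pi[of i] pi[of j] False \<open>i \<noteq> 0\<close> by simp
      qed
    qed
  qed (use sp in auto)
  show ?thesis
    using easy_dir[OF b lp eq] unfolding integrable_acs_def by auto
qed


lemma span2_decomp:
  fixes u v :: "'a::euclidean_space"
  assumes "u \<in> Basis" "v \<in> Basis" "u \<noteq> v" "z \<in> span {u, v}"
  shows "z = (z \<bullet> u) *\<^sub>R u + (z \<bullet> v) *\<^sub>R v"
proof -
  obtain a k where "z - a *\<^sub>R u = k *\<^sub>R v" using assms(4) unfolding span_insert span_singleton by auto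
  then have z: "z = a *\<^sub>R u + k *\<^sub>R v" by (simp add: algebra_simps)
  have "z \<bullet> u = a" "z \<bullet> v = k" using assms(1-3) by (auto simp: z inner_add_left inner_Basis)
  then show ?thesis using z by simp
qed

lemma inner_out:
  fixes u v w :: "'a::euclidean_space"
  assumes "u \<in> Basis" "v \<in> Basis" "w \<in> Basis" "z \<in> span {u, v}" "w \<noteq> u" "w \<noteq> v"
  shows "z \<bullet> w = 0"
proof -
  obtain a k where "z - a *\<^sub>R u = k *\<^sub>R v" using assms(4) unfolding span_insert span_singleton by auto
  then have z: "z = a *\<^sub>R u + k *\<^sub>R v" by (simp add: algebra_simps)
  show ?thesis using assms by (auto simp: z inner_add_left inner_Basis)
qed

lemma indep2_Basis:
  fixes u v :: "'a::euclidean_space"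
  assumes "u \<in> Basis" "v \<in> Basis"
  shows "independent {u, v}"
proof -
  have "{u, v} \<subseteq> Basis" using assms by auto
  then show ?thesis using independent_mono[OF independent_Basis] by blast
qed

lemma indep2_Basis3:
  fixes u v w :: "'a::euclidean_space"
  assumes "u \<in> Basis" "v \<in> Basis" "w \<in> Basis" "v \<noteq> u" "w \<noteq> u" "v \<noteq> w"
  shows "independent {v + w, u}" "v + w \<noteq> u"
proof -
  have "v + w \<notin> span {u}"
  proof
    assume "v + w \<in> span {u}"
    then obtain k where "v + w = k *\<^sub>R u" unfolding span_singleton by auto
    then have "(v + w) \<bullet> v = (k *\<^sub>R u) \<bullet> v" by simp
    then show False using assms by (auto simp: inner_add_left inner_Basis)
  qed
  moreover have "independent {u}" using assms(1) independent_mono[OF independent_Basis] by auto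
  ultimately show "independent {v + w, u}" by (simp add: independent_insertI)
  show "v + w \<noteq> u"
  proof
    assume "v + w = u"
    then have "(v + w) \<bullet> v = u \<bullet> v" by simp
    then show False using assms by (auto simp: inner_add_left inner_Basis)
  qed
qed

lemma struct_from_span:
  fixes br :: "'a::euclidean_space \<Rightarrow> 'a \<Rightarrow> 'a"
  assumes L: "lie_algebra br" and na: "\<not> abelian br" and D2: "DIM('a) \<ge> 2"
    and P: "\<And>X Y. independent {X, Y} \<Longrightarrow> X \<noteq> Y \<Longrightarrow> br X Y \<in> span {X, Y}"
  shows "\<exists>c. \<forall>x y. br x y = (x \<bullet> c) *\<^sub>R y - (y \<bullet> c) *\<^sub>R x"
proof -
  have b: "bilinear br" using L unfolding lie_algebra_def by auto
  have as: "\<And>x y. br x y = - br y x" using br_antisym[OF L] by blast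
  have dec: "br u v = (br u v \<bullet> u) *\<^sub>R u + (br u v \<bullet> v) *\<^sub>R v" if "u \<in> Basis" "v \<in> Basis" "u \<noteq> v" for u v
    using span2_decomp[OF that P[OF indep2_Basis[OF that(1,2)] that(3)]] .
  have out: "br u v \<bullet> w = 0" if "u \<in> Basis" "v \<in> Basis" "w \<in> Basis" "w \<noteq> u" "w \<noteq> v" "u \<noteq> v" for u v w
    using inner_out[OF that(1,2,3) P[OF indep2_Basis[OF that(1,2)] that(6)] that(4,5)] .
  have wd: "br u v \<bullet> v = br u w \<bullet> w"
    if "u \<in> Basis" "v \<in> Basis" "w \<in> Basis" "v \<noteq> u" "w \<noteq> u" for u v w
  proof (cases "v = w")
    case True then show ?thesis by simp
  next
    case False
    note i = indep2_Basis3[OF that(1,2,3,4,5) False]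
    have m: "br (v + w) u \<in> span {v + w, u}" using P[OF i] .
    obtain a k where "br (v + w) u - a *\<^sub>R (v + w) = k *\<^sub>R u" using m unfolding span_insert span_singleton by auto
    then have z: "br (v + w) u = a *\<^sub>R (v + w) + k *\<^sub>R u" by (simp add: algebra_simps)
    have "br (v + w) u \<bullet> v = a" using that False by (auto simp: z inner_add_left inner_Basis)
    moreover have "br (v + w) u \<bullet> w = a" using that False by (auto simp: z inner_add_left inner_Basis)
    moreover have "br (v + w) u = br v u + br w u" using bilinear_ladd[OF b] by simp
    moreover have "br w u \<bullet> v = 0" using out[of w u v] that False by auto
    moreover have "br v u \<bullet> w = 0" using out[of v u w] that False by auto
    ultimately have "br v u \<bullet> v = br w u \<bullet> w" by (simp add: inner_add_left)
    then show ?thesis using as[of v u] as[of w u] by simp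
  qed
  have ex: "\<exists>v. v \<in> Basis \<and> v \<noteq> u" for u :: 'a
  proof (rule ccontr)
    assume "\<not> ?thesis"
    then have "Basis \<subseteq> {u}" by auto
    then have "card (Basis :: 'a set) \<le> 1" by (metis card.empty card.insert card_mono empty_iff finite.intros(1) finite_insert subset_singletonD le_numeral_extra(4) One_nat_def)
    then show False using D2 by simp
  qed
  define oth where "oth u = (SOME v. v \<in> Basis \<and> v \<noteq> (u::'a))" for u
  have oth: "oth u \<in> Basis" "oth u \<noteq> u" for u using someI_ex[OF ex[of u]] unfolding oth_def by auto
  define \<phi> where "\<phi> u = br u (oth u) \<bullet> oth u" for u
  have \<phi>: "br u v \<bullet> v = \<phi> u" if "u \<in> Basis" "v \<in> Basis" "v \<noteq> u" for u v
    unfolding \<phi>_def using wd[OF that(1,2) oth(1)[of u] that(3) oth(2)] .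
  define c where "c = (\<Sum>u\<in>Basis. \<phi> u *\<^sub>R u)"
  have cu: "u \<bullet> c = \<phi> u" if "u \<in> Basis" for u
    using that by (simp add: c_def inner_sum_right inner_Basis if_distrib cong: if_cong)
  have bg: "bilinear (\<lambda>x y. (x \<bullet> c) *\<^sub>R y - (y \<bullet> c) *\<^sub>R x)"
    unfolding bilinear_def
    by (auto intro!: linearI simp: inner_add_left algebra_simps)
  have "br = (\<lambda>x y. (x \<bullet> c) *\<^sub>R y - (y \<bullet> c) *\<^sub>R x)"
  proof (rule bilinear_eq_stdbasis[OF b bg])
    fix u v :: 'a assume uv: "u \<in> Basis" "v \<in> Basis"
    show "br u v = (u \<bullet> c) *\<^sub>R v - (v \<bullet> c) *\<^sub>R u"
    proof (cases "u = v")
      case True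
      then show ?thesis using L unfolding lie_algebra_def by simp
    next
      case False
      have "br u v \<bullet> u = - (br v u \<bullet> u)" using as[of u v] by simp
      then have "br u v \<bullet> u = - \<phi> v" using \<phi>[of v u] uv False by simp
      moreover have "br u v \<bullet> v = \<phi> u" using \<phi>[of u v] uv False by simp
      ultimately show ?thesis using dec[OF uv False] cu uv by (simp add: algebra_simps)
    qed
  qed
  then show ?thesis by metis
qed


lemma basis_from_c:
  fixes br :: "'a::euclidean_space \<Rightarrow> 'a \<Rightarrow> 'a"
  assumes na: "\<not> abelian br" and eq: "\<And>x y. br x y = (x \<bullet> c) *\<^sub>R y - (y \<bullet> c) *\<^sub>R x"
  shows "\<exists>e :: nat \<Rightarrow> 'a.
        inj_on e {..<DIM('a)} \<and>
        independent (e ` {..<DIM('a)}) \<and> span (e ` {..<DIM('a)}) = UNIV \<and>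
        (\<forall>i\<in>{1..<DIM('a)}. br (e 0) (e i) = e i \<and> br (e i) (e 0) = - e i) \<and>
        (\<forall>i<DIM('a). \<forall>j<DIM('a). (i = 0 \<longleftrightarrow> j = 0) \<longrightarrow> br (e i) (e j) = 0)"
proof -
  have c0: "c \<noteq> 0" using na eq unfolding abelian_def by auto
  have ss: "subspace {x. c \<bullet> x = 0}" by (rule subspace_hyperplane)
  obtain B where B: "B \<subseteq> {x. c \<bullet> x = 0}" "independent B" "card B = dim {x. c \<bullet> x = 0}"
      "span B = {x. c \<bullet> x = 0}"
    using orthonormal_basis_subspace[OF ss] by metis
  have cB: "card B = DIM('a) - 1" using B(3) dim_hyperplane[OF c0] by simp
  have fB: "finite B" using B(2) finiteI_independent by blast
  define e0 where "e0 = (1 / (c \<bullet> c)) *\<^sub>R c"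
  have ce0: "c \<bullet> e0 = 1" using c0 by (simp add: e0_def)
  have e0n: "e0 \<notin> span B" using B(4) ce0 by auto
  have e0B: "e0 \<notin> B" using e0n span_base by blast
  have indB': "independent (insert e0 B)" using independent_insertI[OF e0n B(2)] .
  have cB': "card (insert e0 B) = DIM('a)" using cB fB e0B DIM_positive by simp
  have spB': "span (insert e0 B) = UNIV"
    using card_eq_dim[of "insert e0 B" UNIV] indB' cB' fB by auto
  obtain h where h: "bij_betw h {0..<card B} B" using ex_bij_betw_nat_finite[OF fB] by blast
  define e where "e k = (if k = 0 then e0 else h (k - 1))" for k
  have img: "e ` {..<DIM('a)} = insert e0 B"
  proof
    show "e ` {..<DIM('a)} \<subseteq> insert e0 B"
    proof
      fix x assume "x \<in> e ` {..<DIM('a)}"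
      then obtain k where k: "k < DIM('a)" "x = e k" by auto
      show "x \<in> insert e0 B"
      proof (cases "k = 0")
        case False
        then have "k - 1 \<in> {0..<card B}" using k cB by auto
        then show ?thesis using h k False unfolding e_def bij_betw_def by auto
      qed (use k e_def in auto)
    qed
    show "insert e0 B \<subseteq> e ` {..<DIM('a)}"
    proof
      fix x assume "x \<in> insert e0 B"
      then show "x \<in> e ` {..<DIM('a)}"
      proof
        assume "x = e0" then show ?thesis using DIM_positive unfolding e_def by (auto intro!: image_eqI[of _ _ 0])
      next
        assume "x \<in> B"
        then obtain j where j: "j < card B" "x = h j" using h unfolding bij_betw_def by (metis atLeastLessThan_iff imageE)
        then have "e (Suc j) = x" "Suc j < DIM('a)" using cB unfolding e_def by auto
        then show ?thesis by (metis image_eqI lessThan_iff)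
      qed
    qed
  qed
  have inj: "inj_on e {..<DIM('a)}"
  proof -
    have "card (e ` {..<DIM('a)}) = card {..<DIM('a)}" using img cB' by simp
    then show ?thesis by (simp add: eq_card_imp_inj_on)
  qed
  have eB: "c \<bullet> e i = 0" if "i \<in> {1..<DIM('a)}" for i
  proof -
    have "i - 1 \<in> {0..<card B}" using that cB by auto
    then have "e i \<in> B" using that h unfolding e_def bij_betw_def by auto
    then show ?thesis using B(1) by auto
  qed
  have e00: "e 0 = e0" by (simp add: e_def)
  show ?thesis
  proof (intro exI[of _ e] conjI)
    show "inj_on e {..<DIM('a)}" by (rule inj)
    show "independent (e ` {..<DIM('a)})" using img indB' by simp
    show "span (e ` {..<DIM('a)}) = UNIV" using img spB' by simp
    show "\<forall>i\<in>{1..<DIM('a)}. br (e 0) (e i) = e i \<and> br (e i) (e 0) = - e i"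
      using eB ce0 e00 by (simp add: eq inner_commute)
    show "\<forall>i<DIM('a). \<forall>j<DIM('a). (i = 0 \<longleftrightarrow> j = 0) \<longrightarrow> br (e i) (e j) = 0"
    proof (intro allI impI)
      fix i j assume ij: "i < DIM('a)" "j < DIM('a)" "(i = 0) = (j = 0)"
      show "br (e i) (e j) = 0"
      proof (cases "i = 0")
        case True then show ?thesis using ij by (simp add: eq)
      next
        case False
        then show ?thesis using ij eB[of i] eB[of j] by (simp add: eq inner_commute)
      qed
    qed
  qed
qed


lemma key:
  fixes br :: "'a::euclidean_space \<Rightarrow> 'a \<Rightarrow> 'a"
  assumes L: "lie_algebra br" and ev: "even DIM('a)"
    and all: "\<And>J. J \<in> almost_complex_structures \<Longrightarrow> J \<in> integrable_acs br"
    and ind: "independent {X, Y}" and XY: "X \<noteq> Y"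
  shows "br X Y \<in> span {X, Y}"
proof (rule ccontr)
  define Z where "Z = br X Y"
  assume "br X Y \<notin> span {X, Y}"
  then have Zn: "Z \<notin> span {X, Y}" by (simp add: Z_def)
  have bl: "bilinear br" using L unfolding lie_algebra_def by auto
  have ZX: "Z \<noteq> X" "Z \<noteq> Y" using Zn span_base by (metis insertI1, metis insertI1 insertI2)
  define S3 where "S3 = insert Z {X, Y}"
  have i3: "independent S3" unfolding S3_def using independent_insertI[OF Zn ind] .
  have c3: "card S3 = 3" unfolding S3_def using ZX XY by simp
  have "span S3 \<noteq> UNIV"
  proof
    assume "span S3 = UNIV"
    then have "dim S3 = DIM('a)" using dim_eq_full by blast
    then have "DIM('a) = 3" using dim_eq_card_independent[OF i3] c3 by simp
    then show False using ev by simp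
  qed
  then obtain B where Bn: "B \<notin> span S3" by auto
  have BS3: "B \<noteq> X" "B \<noteq> Y" "B \<noteq> Z" using Bn span_base unfolding S3_def by (metis insertI1 insertI2)+
  define S where "S = insert B S3"
  have iS: "independent S" unfolding S_def using independent_insertI[OF Bn i3] .
  have cS: "card S = 4" unfolding S_def S3_def using ZX XY BS3 by simp
  obtain T where T: "S \<subseteq> T" "independent T" "UNIV \<subseteq> span T"
    using maximal_independent_subset_extend[OF subset_UNIV iS] by metis
  have fT: "finite T" using T(2) finiteI_independent by blast
  have spT: "span T = UNIV" using T(3) by auto
  have cT: "card T = DIM('a)" using dim_eq_full[of T] spT dim_eq_card_independent[OF T(2)] by simp
  define R where "R = T - S"
  have fR: "finite R" using fT R_def by auto
  have cR: "card R = DIM('a) - 4" unfolding R_def using card_Diff_subset[OF finite_subset[OF T(1) fT] T(1)] cS cT by simp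
  have D4: "4 \<le> DIM('a)" using card_mono[OF fT T(1)] cS cT by simp
  have eR: "even (card R)" using cR ev D4 by presburger
  obtain h where h: "bij_betw h {0..<card R} R" using ex_bij_betw_nat_finite[OF fR] by blast
  have hR: "h k \<in> R" if "k < card R" for k using h that unfolding bij_betw_def by auto
  have hinv: "inv_into {0..<card R} h (h k) = k" if "k < card R" for k
    using h that by (simp add: bij_betw_def inv_into_f_f)
  have Rh: "\<exists>k<card R. b = h k" if "b \<in> R" for b
  proof -
    have "b \<in> h ` {0..<card R}" using h that by (simp add: bij_betw_def)
    then show ?thesis by auto
  qed
  define \<sigma> where "\<sigma> b = (let k = inv_into {0..<card R} h b in if even k then h (k+1) else - h (k-1))" for b
  have RT: "R \<subseteq> T" and RS: "\<And>b. b \<in> R \<Longrightarrow> b \<notin> S" unfolding R_def by auto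
  have SXYZB: "X \<in> S" "Y \<in> S" "Z \<in> S" "B \<in> S" unfolding S_def S3_def by auto
  obtain f :: "'a \<Rightarrow> real" where lf: "linear f" and fv: "\<forall>x\<in>T. f x = (if x = Z then 1 else 0)"
    using linear_independent_extend[OF T(2), of "\<lambda>x. if x = Z then (1::real) else 0"] by blast
  obtain g :: "'a \<Rightarrow> real" where lg: "linear g" and gv: "\<forall>x\<in>T. g x = (if x = X then 1 else 0)"
    using linear_independent_extend[OF T(2), of "\<lambda>x. if x = X then (1::real) else 0"] by blast
  have fgv: "f X = 0" "f Y = 0" "f Z = 1" "f B = 0" "g X = 1" "g Y = 0" "g Z = 0" "g B = 0"
    using fv gv T(1) SXYZB ZX XY BS3 by auto
  have Jex: "\<exists>J. J \<in> almost_complex_structures \<and> J X = t *\<^sub>R Z \<and> J Y = t *\<^sub>R B \<and> (\<forall>v. f (J v) = t * g v)"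
    if t0: "t \<noteq> 0" for t
  proof -
    define hJ where "hJ b = (if b = X then t *\<^sub>R Z else if b = Z then - (1/t) *\<^sub>R X
       else if b = Y then t *\<^sub>R B else if b = B then - (1/t) *\<^sub>R Y else \<sigma> b)" for b
    obtain J where lJ: "linear J" and Jv: "\<forall>x\<in>T. J x = hJ x"
      using linear_independent_extend[OF T(2), of hJ] by blast
    have JS: "J X = t *\<^sub>R Z" "J Z = - (1/t) *\<^sub>R X" "J Y = t *\<^sub>R B" "J B = - (1/t) *\<^sub>R Y"
      using Jv SXYZB T(1) ZX XY BS3 unfolding hJ_def by auto
    have JR: "J b = \<sigma> b" if "b \<in> R" for b
    proof -
      have "b \<noteq> X" "b \<noteq> Y" "b \<noteq> Z" "b \<noteq> B" using RS[OF that] SXYZB by auto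
      then show ?thesis using Jv RT that unfolding hJ_def by auto
    qed
    have JRk: "J (h k) = (if even k then h (k+1) else - h (k-1))" if "k < card R" for k
      using JR[OF hR[OF that]] hinv[OF that] unfolding \<sigma>_def by simp
    have JJb: "J (J b) = - b" if "b \<in> T" for b
    proof (cases "b \<in> S")
      case True
      then show ?thesis unfolding S_def S3_def using JS t0
        by (auto simp: linear_cmul[OF lJ] linear_neg[OF lJ])
    next
      case False
      then have "b \<in> R" using that R_def by auto
      then obtain k where k: "k < card R" "b = h k" using Rh by blast
      show ?thesis
      proof (cases "even k")
        case True
        then have k1: "k + 1 < card R" using k eR by (metis Suc_eq_plus1 Suc_lessI even_Suc)
        have "J (J b) = J (h (k+1))" using JRk[OF k(1)] True k by simp
        also have "\<dots> = - h k" using JRk[OF k1] True by simp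
        finally show ?thesis using k by simp
      next
        case False
        then have k1: "k - 1 < card R" "even (k - 1)" "k - 1 + 1 = k" using k by auto
        have "J (J b) = - J (h (k-1))" using JRk[OF k(1)] False k by (simp add: linear_neg[OF lJ])
        also have "\<dots> = - h k" using JRk[OF k1(1)] k1 by simp
        finally show ?thesis using k by simp
      qed
    qed
    have JJ: "J (J x) = - x" for x
      using linear_eq_on_span[of "\<lambda>x. J (J x)" "\<lambda>x. - x" T x] JJb spT
        linear_compose[OF lJ lJ] linear_uminus by (auto simp: o_def)
    have fJ: "f (J x) = t * g x" for x
    proof (rule linear_eq_on_span[of "\<lambda>x. f (J x)" "\<lambda>x. t * g x" T x])
      show "linear (\<lambda>x. f (J x))" using linear_compose[OF lJ lf] by (simp add: o_def)
      show "linear (\<lambda>x. t * g x)" using lg by (auto intro!: linearI simp: linear_add linear_cmul)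
      show "x \<in> span T" using spT by simp
      fix b assume bT: "b \<in> T"
      show "f (J b) = t * g b"
      proof (cases "b \<in> S")
        case True
        then show ?thesis unfolding S_def S3_def using JS fgv t0
          by (auto simp: linear_cmul[OF lf] linear_neg[OF lf])
      next
        case False
        then have bR: "b \<in> R" using bT R_def by auto
        then obtain k where k: "k < card R" "b = h k" using Rh by blast
        have bX: "b \<noteq> X" using False SXYZB by auto
        have fh: "f (h j) = 0" if "j < card R" for j
        proof -
          have "h j \<in> T" "h j \<noteq> Z" using hR[OF that] RT RS SXYZB by auto
          then show ?thesis using fv by auto
        qed
        show ?thesis
        proof (cases "even k")
          case True
          then have k1: "k + 1 < card R" using k eR by (metis Suc_eq_plus1 Suc_lessI even_Suc)
          show ?thesis using JRk[OF k(1)] True k fh[OF k1] gv bT bX by simp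
        next
          case False
          then have k1: "k - 1 < card R" using k by auto
          show ?thesis using JRk[OF k(1)] False k fh[OF k1] gv bT bX by (simp add: linear_neg[OF lf])
        qed
      qed
    qed
    have "J \<in> almost_complex_structures" unfolding almost_complex_structures_def using lJ JJ by auto
    then show ?thesis using JS fJ by blast
  qed
  have fZ: "f Z = 1" using fv T(1) SXYZB by auto
  have eqt: "t * t * (f (br Z B) - g (br Z Y) - g (br X B)) = 1" if t0: "t \<noteq> 0" for t
  proof -
    obtain J where J: "J \<in> almost_complex_structures" "J X = t *\<^sub>R Z" "J Y = t *\<^sub>R B" "\<forall>v. f (J v) = t * g v"
      using Jex[OF t0] by blast
    have "br (J X) (J Y) = br X Y + J (br (J X) Y) + J (br X (J Y))"
      using all[OF J(1)] unfolding integrable_acs_def by auto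
    then have "f (br (J X) (J Y)) = f (br X Y + J (br (J X) Y) + J (br X (J Y)))" by simp
    then have "t * t * f (br Z B) = 1 + t * t * g (br Z Y) + t * t * g (br X B)"
      using J fZ by (simp add: Z_def[symmetric] linear_add[OF lf] linear_cmul[OF lf] linear_cmul[OF lg]
          bilinear_lmul[OF bl] bilinear_rmul[OF bl])
    then show ?thesis by (simp add: algebra_simps)
  qed
  have "1 * 1 * (f (br Z B) - g (br Z Y) - g (br X B)) = 1" using eqt[of 1] by simp
  moreover have "2 * 2 * (f (br Z B) - g (br Z Y) - g (br X B)) = (1::real)" using eqt[of 2] by simp
  ultimately show False by simp
qed

theorem proposition4p1:
  fixes br :: "'a::euclidean_space \<Rightarrow> 'a \<Rightarrow> 'a"
  assumes "lie_algebra br"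
    and "\<not> abelian br"
    and "even DIM('a)"
  shows "integrable_acs br = almost_complex_structures \<longleftrightarrow>
    (\<exists>e :: nat \<Rightarrow> 'a.
        inj_on e {..<DIM('a)} \<and>
        independent (e ` {..<DIM('a)}) \<and> span (e ` {..<DIM('a)}) = UNIV \<and>
        (\<forall>i\<in>{1..<DIM('a)}. br (e 0) (e i) = e i \<and> br (e i) (e 0) = - e i) \<and>
        (\<forall>i<DIM('a). \<forall>j<DIM('a). (i = 0 \<longleftrightarrow> j = 0) \<longrightarrow> br (e i) (e j) = 0))"
proof
  assume H: "integrable_acs br = almost_complex_structures"
  have all: "\<And>J. J \<in> almost_complex_structures \<Longrightarrow> J \<in> integrable_acs br" using H by simp
  have "DIM('a) \<noteq> 1" using assms(3) by auto
  then have D2: "DIM('a) \<ge> 2" using DIM_positive[where 'a='a] by linarith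
  have "\<exists>c. \<forall>x y. br x y = (x \<bullet> c) *\<^sub>R y - (y \<bullet> c) *\<^sub>R x"
    by (rule struct_from_span[OF assms(1,2) D2 key[OF assms(1,3) all]])
  then obtain c where c0: "\<forall>x y. br x y = (x \<bullet> c) *\<^sub>R y - (y \<bullet> c) *\<^sub>R x" by (rule exE)
  note c = c0[rule_format]
  show "\<exists>e :: nat \<Rightarrow> 'a.
        inj_on e {..<DIM('a)} \<and>
        independent (e ` {..<DIM('a)}) \<and> span (e ` {..<DIM('a)}) = UNIV \<and>
        (\<forall>i\<in>{1..<DIM('a)}. br (e 0) (e i) = e i \<and> br (e i) (e 0) = - e i) \<and>
        (\<forall>i<DIM('a). \<forall>j<DIM('a). (i = 0 \<longleftrightarrow> j = 0) \<longrightarrow> br (e i) (e j) = 0)"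
    using basis_from_c[OF assms(2) c] .
next
  assume "\<exists>e :: nat \<Rightarrow> 'a.
        inj_on e {..<DIM('a)} \<and>
        independent (e ` {..<DIM('a)}) \<and> span (e ` {..<DIM('a)}) = UNIV \<and>
        (\<forall>i\<in>{1..<DIM('a)}. br (e 0) (e i) = e i \<and> br (e i) (e 0) = - e i) \<and>
        (\<forall>i<DIM('a). \<forall>j<DIM('a). (i = 0 \<longleftrightarrow> j = 0) \<longrightarrow> br (e i) (e j) = 0)"
  then obtain e :: "nat \<Rightarrow> 'a" where e: "inj_on e {..<DIM('a)} \<and>
        independent (e ` {..<DIM('a)}) \<and> span (e ` {..<DIM('a)}) = UNIV \<and>
        (\<forall>i\<in>{1..<DIM('a)}. br (e 0) (e i) = e i \<and> br (e i) (e 0) = - e i) \<and>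
        (\<forall>i<DIM('a). \<forall>j<DIM('a). (i = 0 \<longleftrightarrow> j = 0) \<longrightarrow> br (e i) (e j) = 0)" by (rule exE)
  note e1 = conjunct1[OF e] and e2 = conjunct1[OF conjunct2[OF e]]
    and e3 = conjunct1[OF conjunct2[OF conjunct2[OF e]]]
    and e4 = conjunct1[OF conjunct2[OF conjunct2[OF conjunct2[OF e]]]]
    and e5 = conjunct2[OF conjunct2[OF conjunct2[OF conjunct2[OF e]]]]
  show "integrable_acs br = almost_complex_structures"
    by (rule from_basis[OF assms(1) e1 e2 e3 e4 e5])
qed

end
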